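(* Let $b\in\mathbb{Z}$ and let $q\ge 0$ be an integer. For $k\in\mathbb{N}$ and $z\in\mathbb{Z}$ let $F_{k,z}$ and $G_{k,z}$ be distribution functions of probability distributions supported on the nonnegative integers. Let $(S_k)_{k\ge0}$ and $(T_k)_{k\ge0}$ be integer-valued processes with $S_0=T_0=b$, $$S_{k+1}=S_k+X_k-q,\qquad T_{k+1}=T_k+Y_k-q,$$ where, conditionally on $S_0,\dots,S_k$, the variable $X_k$ has distribution function $F_{k,S_k}$, and conditionally on $T_0,\dots,T_k$, the variable $Y_k$ has distribution function $G_{k,T_k}$. Assume: (1) for all $k\in\mathbb{N}$, $z\in\mathbb{Z}$, $l\in\mathbb{R}$: $G_{k,z}(l)\le G_{k,z-1}(l+1)$; (2) there is an integer $M\ge b$ such that for all $k\in\mathbb N$ and all integers $z\le M-kq$, $F_{k,z}\succ G_{k,z}$. Then for every $n\ge1$ and every integers $l_1,\dots,l_n$ with $l_k\le M-kq$ for all $k$, $$\Pr[S_1>l_1,S_2>l_2,\dots,S_n>l_n]\ \ge\ \Pr[T_1>l_1,T_2>l_2,\dots,T_n>l_n].$$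
   Context: For distribution functions $F,G$ on $\mathbb{R}$, $F\succ G$ means $F(t)\le G(t)$ for all $t\in\mathbb{R}$ (i.e. $F$ stochastically dominates $G$). *)

theory Defs
  imports "HOL-Probability.Probability"
begin

definition dist_fun :: "nat pmf \<Rightarrow> real \<Rightarrow> real" where
  "dist_fun p t = measure_pmf.prob p {x. real x \<le> t}"

definition st_dom :: "(real \<Rightarrow> real) \<Rightarrow> (real \<Rightarrow> real) \<Rightarrow> bool" where
  "st_dom F G \<longleftrightarrow> (\<forall>t. F t \<le> G t)"

text \<open>Joint law of the path (S_1, ..., S_n) (as a list of length n, entry i-1 being S_i)
  of the process S_0 = b, S_{k+1} = S_k + X_k - q, where conditionally on S_0..S_k,
  X_k has law P k S_k.\<close>
fun path :: "(nat \<Rightarrow> int \<Rightarrow> nat pmf) \<Rightarrow> int \<Rightarrow> int \<Rightarrow> nat \<Rightarrow> int list pmf" where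
  "path P q b 0 = return_pmf []"
| "path P q b (Suc n) =
     bind_pmf (path P q b n) (\<lambda>xs.
       map_pmf (\<lambda>x. xs @ [last (b # xs) + int x - q]) (P n (last (b # xs))))"

end

theory Submission
  imports Defs
begin


lemma path_front:
  "path P q b (Suc n) = bind_pmf (P 0 b) (\<lambda>x. map_pmf (\<lambda>ys. (b + int x - q) # ys)
      (path (\<lambda>k. P (Suc k)) q (b + int x - q) n))"
proof (induction n)
  case 0
  then show ?case by (simp add: map_pmf_def bind_return_pmf)
next
  case (Suc n)
  have "path P q b (Suc (Suc n)) = bind_pmf (path P q b (Suc n)) (\<lambda>xs.
       map_pmf (\<lambda>x. xs @ [last (b # xs) + int x - q]) (P (Suc n) (last (b # xs))))"
    by (simp only: path.simps)
  also have "\<dots> = bind_pmf (P 0 b) (\<lambda>x. map_pmf (\<lambda>ys. (b + int x - q) # ys)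
      (path (\<lambda>k. P (Suc k)) q (b + int x - q) (Suc n)))"
    unfolding Suc by (simp add: bind_assoc_pmf bind_map_pmf map_bind_pmf map_pmf_comp)
  finally show ?case .
qed

lemma int_bdd: "(\<And>x. \<bar>f x\<bar> \<le> B) \<Longrightarrow> integrable (measure_pmf p) (f :: _ \<Rightarrow> real)"
  by (intro measure_pmf.integrable_const_bound[where B=B]) auto

lemma prob_bind:
  "measure_pmf.prob (bind_pmf p N) E = (\<integral>x. measure_pmf.prob (N x) E \<partial>p)"
proof -
  have "ennreal (measure_pmf.prob (bind_pmf p N) E) = emeasure (bind_pmf p N) E"
    by (simp add: measure_pmf.emeasure_eq_measure)
  also have "\<dots> = (\<integral>\<^sup>+x. emeasure (N x) E \<partial>p)" by simp
  also have "\<dots> = (\<integral>\<^sup>+x. ennreal (measure_pmf.prob (N x) E) \<partial>p)"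
    by (simp add: measure_pmf.emeasure_eq_measure)
  also have "\<dots> = ennreal (\<integral>x. measure_pmf.prob (N x) E \<partial>p)"
    by (intro nn_integral_eq_integral int_bdd[where B=1]) auto
  finally show ?thesis by (simp add: integral_nonneg_AE)
qed

definition Ev :: "nat \<Rightarrow> (nat \<Rightarrow> int) \<Rightarrow> int list set" where
  "Ev n l = {xs. \<forall>k\<in>{1..n}. xs ! (k - 1) > l k}"

definition A where "A P q b n l = measure_pmf.prob (path P q b n) (Ev n l)"

lemma Ev_cons: "((#) c) -` Ev (Suc n) l = (if c > l 1 then Ev n (\<lambda>k. l (Suc k)) else {})"
proof -
  have "(c # ys \<in> Ev (Suc n) l) \<longleftrightarrow> c > l 1 \<and> ys \<in> Ev n (\<lambda>k. l (Suc k))" for ys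
  proof
    assume h: "c # ys \<in> Ev (Suc n) l"
    have "c > l 1" using h[unfolded Ev_def] by (auto dest: bspec[of _ _ 1])
    moreover have "ys \<in> Ev n (\<lambda>k. l (Suc k))" unfolding Ev_def
    proof safe
      fix k assume "k \<in> {1..n}"
      then have "Suc k \<in> {1..Suc n}" by auto
      with h have "(c#ys) ! (Suc k - 1) > l (Suc k)" unfolding Ev_def by blast
      then show "ys ! (k - 1) > l (Suc k)" using \<open>k \<in> {1..n}\<close> by (cases k) auto
    qed
    ultimately show "c > l 1 \<and> ys \<in> Ev n (\<lambda>k. l (Suc k))" by blast
  next
    assume h: "c > l 1 \<and> ys \<in> Ev n (\<lambda>k. l (Suc k))"
    show "c # ys \<in> Ev (Suc n) l" unfolding Ev_def
    proof safe
      fix k assume k: "k \<in> {1..Suc n}"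
      show "(c#ys) ! (k - 1) > l k"
      proof (cases "k = 1")
        case True then show ?thesis using h by simp
      next
        case False
        then obtain j where j: "k = Suc j" "j \<in> {1..n}" using k by (cases k) auto
        have "l (Suc j) < ys ! (j - 1)" using h j(2) unfolding Ev_def by blast
        then show ?thesis using j by (cases j) auto
      qed
    qed
  qed
  then show ?thesis by auto
qed

lemma A_Suc: "A P q b (Suc n) l = (\<integral>x. (if b + int x - q > l 1 then
    A (\<lambda>k. P (Suc k)) q (b + int x - q) n (\<lambda>k. l (Suc k)) else 0) \<partial>P 0 b)"
  unfolding A_def path_front prob_bind measure_map_pmf Ev_cons
  by (intro Bochner_Integration.integral_cong) auto

lemma A_0: "A P q b 0 l = 1"
  by (simp add: A_def Ev_def)

lemma A_bounds: "0 \<le> A P q b n l" "A P q b n l \<le> 1"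
  by (auto simp: A_def)



lemma tail_le:
  assumes D: "\<And>t. dist_fun p t \<le> dist_fun p' t"
  shows "measure_pmf.prob p' {Suc N..} \<le> measure_pmf.prob p {Suc N..}"
proof -
  have e: "{Suc N..} = UNIV - {x. real x \<le> real N}" by auto
  have "measure_pmf.prob r {Suc N..} = 1 - dist_fun r (real N)" for r :: "nat pmf"
    unfolding e dist_fun_def by (subst measure_pmf.prob_compl[symmetric]) auto
  then show ?thesis using D[of "real N"] by simp
qed

lemma lim_min:
  fixes \<phi> :: "nat \<Rightarrow> real"
  fixes r :: "nat pmf"
  assumes B: "\<And>x. \<bar>\<phi> x\<bar> \<le> 1"
  shows "(\<lambda>N. \<integral>x. \<phi> (min x N) \<partial>r) \<longlonglongrightarrow> (\<integral>x. \<phi> x \<partial>r)"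
proof (rule integral_dominated_convergence[where w="\<lambda>_. 1"])
  show "integrable (measure_pmf r) (\<lambda>_. 1::real)" by simp
  show "AE x in measure_pmf r. (\<lambda>i. \<phi> (min x i)) \<longlonglongrightarrow> \<phi> x"
  proof (rule AE_I2)
    fix x
    have "eventually (\<lambda>i. \<phi> (min x i) = \<phi> x) sequentially"
      using eventually_ge_at_top[of x] by eventually_elim (simp add: min_absorb1)
    then show "(\<lambda>i. \<phi> (min x i)) \<longlonglongrightarrow> \<phi> x" by (rule tendsto_eventually)
  qed
  show "AE x in measure_pmf r. norm (\<phi> (min x i)) \<le> 1" for i using B by auto
qed auto

lemma dom_integral:
  fixes p p' :: "nat pmf" and \<phi> :: "nat \<Rightarrow> real"
  assumes D: "\<And>t. dist_fun p t \<le> dist_fun p' t"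
    and m: "mono \<phi>" and B0: "\<And>x. 0 \<le> \<phi> x" and B1: "\<And>x. \<phi> x \<le> 1"
  shows "(\<integral>x. \<phi> x \<partial>p') \<le> (\<integral>x. \<phi> x \<partial>p)"
proof -
  have B: "\<bar>\<phi> x\<bar> \<le> 1" for x using B0[of x] B1[of x] by simp
  have eq: "(\<integral>x. \<phi> (min x (Suc N)) \<partial>r) = (\<integral>x. \<phi> (min x N) \<partial>r)
      + (\<phi> (Suc N) - \<phi> N) * measure_pmf.prob r {Suc N..}" for r :: "nat pmf" and N
  proof -
    have "(\<lambda>x. \<phi> (min x (Suc N))) = (\<lambda>x. \<phi> (min x N) + (\<phi> (Suc N) - \<phi> N) * indicator {Suc N..} x)"
      by (rule ext) (auto simp: indicator_def min_def le_Suc_eq)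
    then have "(\<integral>x. \<phi> (min x (Suc N)) \<partial>r) = (\<integral>x. \<phi> (min x N) + (\<phi> (Suc N) - \<phi> N) * indicator {Suc N..} x \<partial>r)"
      by simp
    also have "\<dots> = (\<integral>x. \<phi> (min x N) \<partial>r) + (\<integral>x. (\<phi> (Suc N) - \<phi> N) * indicator {Suc N..} x \<partial>r)"
      by (rule Bochner_Integration.integral_add) (auto intro: int_bdd[where B=1] B)
    also have "(\<integral>x. (\<phi> (Suc N) - \<phi> N) * indicator {Suc N..} x \<partial>r) = (\<phi> (Suc N) - \<phi> N) * measure_pmf.prob r {Suc N..}"
      by simp
    finally show ?thesis .
  qed
  have fin: "(\<integral>x. \<phi> (min x N) \<partial>p') \<le> (\<integral>x. \<phi> (min x N) \<partial>p)" for N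
  proof (induction N)
    case 0 then show ?case by simp
  next
    case (Suc N)
    have d: "0 \<le> \<phi> (Suc N) - \<phi> N" using m by (simp add: mono_def)
    show ?case unfolding eq using Suc mult_left_mono[OF tail_le[OF D, of N] d] by linarith
  qed
  show ?thesis by (rule LIMSEQ_le[OF lim_min[OF B] lim_min[OF B]]) (use fin in auto)
qed



lemma int_step_mono:
  fixes f :: "int \<Rightarrow> real"
  assumes "\<And>z. f (z - 1) \<le> f z" and "b \<le> b'"
  shows "f b \<le> f b'"
proof -
  have "f b \<le> f (b + int d)" for d
  proof (induction d)
    case 0 then show ?case by simp
  next
    case (Suc d)
    have "f (b + int (Suc d) - 1) \<le> f (b + int (Suc d))" by (rule assms(1))
    then show ?case using Suc by (simp add: add.commute add.left_commute)
  qed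
  from this[of "nat (b' - b)"] assms(2) show ?thesis by simp
qed

lemma dist_fun_Suc: "dist_fun (map_pmf Suc p) t = dist_fun p (t - 1)"
proof -
  have "{x. real x \<le> t - 1} = Suc -` {x. real x \<le> t}" by auto
  then show ?thesis unfolding dist_fun_def by simp
qed

lemma A_mono:
  assumes S: "\<And>k z (t::real). dist_fun (P k z) t \<le> dist_fun (P k (z - 1)) (t + 1)"
    and "b \<le> b'"
  shows "A P q b n l \<le> A P q b' n l"
  using assms
proof (induction n arbitrary: P b b' l)
  case 0 then show ?case by (simp add: A_0)
next
  case (Suc n)
  define P' where "P' = (\<lambda>k. P (Suc k))"
  define \<psi> where "\<psi> c = (if c > l 1 then A P' q c n (\<lambda>k. l (Suc k)) else 0)" for c
  have S': "dist_fun (P' k z) t \<le> dist_fun (P' k (z - 1)) (t + 1)" for k z t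
    unfolding P'_def by (rule Suc.prems(1))
  have \<psi>m: "\<psi> c \<le> \<psi> c'" if "c \<le> c'" for c c'
    using Suc.IH[where P=P', OF S' that, of "\<lambda>k. l (Suc k)"] that A_bounds[of P' q c n] A_bounds[of P' q c' n]
    unfolding \<psi>_def by auto
  have \<psi>b: "0 \<le> \<psi> c" "\<psi> c \<le> 1" for c using A_bounds[of P' q c n] unfolding \<psi>_def by auto
  have AS: "A P q z (Suc n) l = (\<integral>x. \<psi> (z + int x - q) \<partial>P 0 z)" for z
    unfolding A_Suc \<psi>_def P'_def ..
  have step: "A P q (z - 1) (Suc n) l \<le> A P q z (Suc n) l" for z
  proof -
    have "A P q (z - 1) (Suc n) l = (\<integral>x. \<psi> (z - 1 + int x - q) \<partial>P 0 (z - 1))" by (rule AS)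
    also have "\<dots> \<le> (\<integral>x. \<psi> (z - 1 + int x - q) \<partial>map_pmf Suc (P 0 z))"
    proof (rule dom_integral)
      show "dist_fun (map_pmf Suc (P 0 z)) t \<le> dist_fun (P 0 (z - 1)) t" for t
        using Suc.prems(1)[of 0 z "t - 1"] by (simp add: dist_fun_Suc)
      show "mono (\<lambda>x. \<psi> (z - 1 + int x - q))" by (rule monoI) (auto intro: \<psi>m)
    qed (auto intro: \<psi>b)
    also have "\<dots> = (\<integral>x. \<psi> (z + int x - q) \<partial>P 0 z)" by (simp add: algebra_simps)
    also have "\<dots> = A P q z (Suc n) l" by (rule AS[symmetric])
    finally show ?thesis .
  qed
  show ?case by (rule int_step_mono[where f="\<lambda>z. A P q z (Suc n) l", OF step Suc.prems(2)])
qed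

lemma A_one:
  assumes q: "0 \<le> q" and "M < b" and "\<forall>k\<in>{1..n}. l k \<le> M - int k * q"
  shows "A P q b n l = 1"
  using assms(2,3)
proof (induction n arbitrary: P M b l)
  case 0 then show ?case by (simp add: A_0)
next
  case (Suc n)
  have "A P q b (Suc n) l = (\<integral>x. 1 \<partial>P 0 b)"
    unfolding A_Suc
  proof (rule Bochner_Integration.integral_cong[OF refl])
    fix x
    have c: "M - q < b + int x - q" using Suc.prems(1) by simp
    have l1: "l 1 \<le> M - q" using Suc.prems(2)[rule_format, of 1] by simp
    have "\<forall>k\<in>{1..n}. l (Suc k) \<le> (M - q) - int k * q"
    proof
      fix k assume "k \<in> {1..n}"
      then have "Suc k \<in> {1..Suc n}" by auto
      then have "l (Suc k) \<le> M - int (Suc k) * q" using Suc.prems(2) by blast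
      then show "l (Suc k) \<le> (M - q) - int k * q" by (simp add: algebra_simps)
    qed
    then have "A (\<lambda>k. P (Suc k)) q (b + int x - q) n (\<lambda>k. l (Suc k)) = 1"
      using Suc.IH[OF c, where l="\<lambda>k. l (Suc k)" and P="\<lambda>k. P (Suc k)"] by blast
    then show "(if b + int x - q > l 1 then A (\<lambda>k. P (Suc k)) q (b + int x - q) n (\<lambda>k. l (Suc k)) else 0) = 1"
      using c l1 by auto
  qed
  then show ?case by simp
qed

lemma main:
  assumes q: "0 \<le> q"
    and G_shift: "\<And>k z (t::real). dist_fun (PG k z) t \<le> dist_fun (PG k (z - 1)) (t + 1)"
    and dom: "\<And>k z. z \<le> M - int k * q \<Longrightarrow> st_dom (dist_fun (PF k z)) (dist_fun (PG k z))"
    and L: "\<forall>k\<in>{1..n}. l k \<le> M - int k * q"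
  shows "A PG q b n l \<le> A PF q b n l"
  using G_shift dom L
proof (induction n arbitrary: PF PG M b l)
  case 0 then show ?case by (simp add: A_0)
next
  case (Suc n)
  show ?case
  proof (cases "M < b")
    case True
    then show ?thesis using A_one[OF q True Suc.prems(3)] A_bounds by simp
  next
    case False
    define \<psi>F where "\<psi>F c = (if c > l 1 then A (\<lambda>k. PF (Suc k)) q c n (\<lambda>k. l (Suc k)) else 0)" for c
    define \<psi>G where "\<psi>G c = (if c > l 1 then A (\<lambda>k. PG (Suc k)) q c n (\<lambda>k. l (Suc k)) else 0)" for c
    have S': "dist_fun (PG (Suc k) z) t \<le> dist_fun (PG (Suc k) (z - 1)) (t + 1)" for k z t
      by (rule Suc.prems(1))
    have D': "st_dom (dist_fun (PF (Suc k) z)) (dist_fun (PG (Suc k) z))" if "z \<le> (M - q) - int k * q" for k z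
      using Suc.prems(2)[of z "Suc k"] that by (simp add: algebra_simps)
    have L': "\<forall>k\<in>{1..n}. l (Suc k) \<le> (M - q) - int k * q"
    proof
      fix k assume "k \<in> {1..n}"
      then have "Suc k \<in> {1..Suc n}" by auto
      then have "l (Suc k) \<le> M - int (Suc k) * q" using Suc.prems(3) by blast
      then show "l (Suc k) \<le> (M - q) - int k * q" by (simp add: algebra_simps)
    qed
    have FG: "\<psi>G c \<le> \<psi>F c" for c
      using Suc.IH[where PG="\<lambda>k. PG (Suc k)" and PF="\<lambda>k. PF (Suc k)" and M="M - q" and l="\<lambda>k. l (Suc k)" and b=c, OF S' D' L'] unfolding \<psi>F_def \<psi>G_def by auto
    have \<psi>Gm: "\<psi>G c \<le> \<psi>G c'" if "c \<le> c'" for c c'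
      using A_mono[where P="\<lambda>k. PG (Suc k)", OF S' that, of q n "\<lambda>k. l (Suc k)"] that
        A_bounds[of "\<lambda>k. PG (Suc k)" q c n] A_bounds[of "\<lambda>k. PG (Suc k)" q c' n]
      unfolding \<psi>G_def by auto
    have \<psi>Gb: "0 \<le> \<psi>G c" "\<psi>G c \<le> 1" for c
      using A_bounds[of "\<lambda>k. PG (Suc k)" q c n] unfolding \<psi>G_def by auto
    have \<psi>Fb: "0 \<le> \<psi>F c" "\<psi>F c \<le> 1" for c
      using A_bounds[of "\<lambda>k. PF (Suc k)" q c n] unfolding \<psi>F_def by auto
    have "A PG q b (Suc n) l = (\<integral>x. \<psi>G (b + int x - q) \<partial>PG 0 b)"
      unfolding A_Suc \<psi>G_def ..
    also have "\<dots> \<le> (\<integral>x. \<psi>G (b + int x - q) \<partial>PF 0 b)"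
    proof (rule dom_integral)
      show "dist_fun (PF 0 b) t \<le> dist_fun (PG 0 b) t" for t
        using Suc.prems(2)[of b 0] False by (simp add: st_dom_def)
      show "mono (\<lambda>x. \<psi>G (b + int x - q))" by (rule monoI) (auto intro: \<psi>Gm)
    qed (auto intro: \<psi>Gb)
    also have "\<dots> \<le> (\<integral>x. \<psi>F (b + int x - q) \<partial>PF 0 b)"
    proof (rule integral_mono)
      have "\<bar>\<psi>G c\<bar> \<le> 1" "\<bar>\<psi>F c\<bar> \<le> 1" for c using \<psi>Gb[of c] \<psi>Fb[of c] by auto
      then show "integrable (measure_pmf (PF 0 b)) (\<lambda>x. \<psi>G (b + int x - q))"
        "integrable (measure_pmf (PF 0 b)) (\<lambda>x. \<psi>F (b + int x - q))"
        by (auto intro: int_bdd[where B=1])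
    qed (rule FG)
    also have "\<dots> = A PF q b (Suc n) l"
      unfolding A_Suc \<psi>F_def ..
    finally show ?thesis .
  qed
qed


theorem lemma2:
  fixes b q M :: int
    and PF PG :: "nat \<Rightarrow> int \<Rightarrow> nat pmf"
  assumes q_nonneg: "0 \<le> q"
    and G_shift: "\<And>k z (l::real). dist_fun (PG k z) l \<le> dist_fun (PG k (z - 1)) (l + 1)"
    and M_ge: "b \<le> M"
    and dom: "\<And>k z. z \<le> M - int k * q \<Longrightarrow> st_dom (dist_fun (PF k z)) (dist_fun (PG k z))"
  shows "\<forall>(n::nat) (l::nat \<Rightarrow> int). n \<ge> 1 \<longrightarrow> (\<forall>k\<in>{1..n}. l k \<le> M - int k * q) \<longrightarrow>
           measure_pmf.prob (path PF q b n) {xs. \<forall>k\<in>{1..n}. xs ! (k - 1) > l k}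
         \<ge> measure_pmf.prob (path PG q b n) {xs. \<forall>k\<in>{1..n}. xs ! (k - 1) > l k}"
proof (intro allI impI)
  fix n :: nat and l :: "nat \<Rightarrow> int"
  assume "\<forall>k\<in>{1..n}. l k \<le> M - int k * q"
  from main[where PF=PF and PG=PG and M=M and q=q and l=l and n=n and b=b, OF q_nonneg G_shift dom this] show
    "measure_pmf.prob (path PF q b n) {xs. \<forall>k\<in>{1..n}. xs ! (k - 1) > l k}
         \<ge> measure_pmf.prob (path PG q b n) {xs. \<forall>k\<in>{1..n}. xs ! (k - 1) > l k}"
    unfolding A_def Ev_def by blast
qed

end
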